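(* Let $\Gamma=\Gamma(G,X)$ be the cofinite Cayley graph. Then $\alpha\colon X\to G$ generates $G$ topologically (i.e. $\overline{\langle\alpha(X)\rangle}=G$) if and only if $\Gamma$ is cofinitely connected.
   Context: Let $G$ be a cofinite group and let $X=\{*\}\,\dot\cup\, E(X)$ be a cofinite graph with a single vertex $*$, together with a uniformly continuous map $\alpha\colon X\to G$ such that $\alpha( * )=1_G$ and $\alpha(\overline e)=(\alpha(e))^{-1}$ for all $e\in E(X)$. The cofinite Cayley graph $\Gamma(G,X)$ has vertex set $V=G\times\{*\}$ and edge set $E=G\times E(X)$, with $s(g,e)=(g,* )$, $t(g,e)=(g\alpha(e),* )$ and $\overline{(g,e)}=(g\alpha(e),\overline e)$; it carries the product uniform structure from $G\times X$, a fundamental system of compatible cofinite entourages being given by the sets $R\times S$ with $R$ a cofinite congruence on $G$ and $S$ a compatible cofinite entourage on $X$ satisfying $(\alpha\times\alpha)[S]\subseteq R$. A cofinite graph is cofinitely connected if for every compatible cofinite equivalence relation $R$ on it, the quotient graph by $R$ is path connected (any two vertices are joined by a finite string of edges $e_1\cdots e_n$ with $t(e_i)=s(e_{i+1})$). *)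

theory Defs
  imports "HOL-Algebra.Generated_Groups"
begin

text \<open>A graph is a carrier set X with a distinguished subset of vertices V,
  a source map s (a retraction of X onto V) and an involution bar on X fixing V
  pointwise.\<close>

record 'a graph =
  carr :: "'a set"
  verts :: "'a set"
  src :: "'a \<Rightarrow> 'a"
  rev :: "'a \<Rightarrow> 'a"

definition edges :: "'a graph \<Rightarrow> 'a set" where
  "edges \<Gamma> = carr \<Gamma> - verts \<Gamma>"

definition tgt :: "'a graph \<Rightarrow> 'a \<Rightarrow> 'a" where
  "tgt \<Gamma> x = src \<Gamma> (rev \<Gamma> x)"

definition is_graph :: "'a graph \<Rightarrow> bool" where
  "is_graph \<Gamma> \<longleftrightarrow>
     verts \<Gamma> \<subseteq> carr \<Gamma> \<and> verts \<Gamma> \<noteq> {} \<and>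
     (\<forall>x\<in>carr \<Gamma>. src \<Gamma> x \<in> verts \<Gamma>) \<and>
     (\<forall>v\<in>verts \<Gamma>. src \<Gamma> v = v) \<and>
     (\<forall>x\<in>carr \<Gamma>. rev \<Gamma> x \<in> carr \<Gamma> \<and> rev \<Gamma> (rev \<Gamma> x) = x) \<and>
     (\<forall>v\<in>verts \<Gamma>. rev \<Gamma> v = v)"

definition cofinite_equiv :: "'a set \<Rightarrow> ('a \<times> 'a) set \<Rightarrow> bool" where
  "cofinite_equiv A R \<longleftrightarrow> equiv A R \<and> finite (A // R)"

definition cofinite_uniformity ::
  "'a set \<Rightarrow> (('a \<times> 'a) set \<Rightarrow> bool) \<Rightarrow> ('a \<times> 'a) set set \<Rightarrow> bool" where
  "cofinite_uniformity A P \<U> \<longleftrightarrow>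
     \<U> \<noteq> {} \<and>
     (\<forall>U\<in>\<U>. Id_on A \<subseteq> U \<and> U \<subseteq> A \<times> A) \<and>
     (\<forall>U W. U \<in> \<U> \<longrightarrow> U \<subseteq> W \<longrightarrow> W \<subseteq> A \<times> A \<longrightarrow> W \<in> \<U>) \<and>
     (\<forall>U\<in>\<U>. \<forall>W\<in>\<U>. U \<inter> W \<in> \<U>) \<and>
     (\<forall>U\<in>\<U>. \<exists>R\<in>\<U>. R \<subseteq> U \<and> cofinite_equiv A R \<and> P R) \<and>
     \<Inter>\<U> = Id_on A"

definition congruence_rel :: "('g, 'b) monoid_scheme \<Rightarrow> ('g \<times> 'g) set \<Rightarrow> bool" where
  "congruence_rel G R \<longleftrightarrow>
     (\<forall>a b c d. (a, b) \<in> R \<longrightarrow> (c, d) \<in> R \<longrightarrow> (a \<otimes>\<^bsub>G\<^esub> c, b \<otimes>\<^bsub>G\<^esub> d) \<in> R)"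

definition cofinite_group :: "('g, 'b) monoid_scheme \<Rightarrow> ('g \<times> 'g) set set \<Rightarrow> bool" where
  "cofinite_group G \<U> \<longleftrightarrow> group G \<and> cofinite_uniformity (carrier G) (congruence_rel G) \<U>"

definition uniform_closure :: "'a set \<Rightarrow> ('a \<times> 'a) set set \<Rightarrow> 'a set \<Rightarrow> 'a set" where
  "uniform_closure A \<U> H = {x \<in> A. \<forall>U\<in>\<U>. U `` {x} \<inter> H \<noteq> {}}"

definition unif_continuous ::
  "'a set \<Rightarrow> ('a \<times> 'a) set set \<Rightarrow> ('b \<times> 'b) set set \<Rightarrow> ('a \<Rightarrow> 'b) \<Rightarrow> bool" where
  "unif_continuous A \<U> \<V> f \<longleftrightarrow> (\<forall>V\<in>\<V>. \<exists>U\<in>\<U>. map_prod f f ` U \<subseteq> V)"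

definition compatible_equiv :: "'a graph \<Rightarrow> ('a \<times> 'a) set \<Rightarrow> bool" where
  "compatible_equiv \<Gamma> R \<longleftrightarrow>
     equiv (carr \<Gamma>) R \<and>
     (\<forall>x y. (x, y) \<in> R \<longrightarrow> (x \<in> verts \<Gamma> \<longleftrightarrow> y \<in> verts \<Gamma>)) \<and>
     (\<forall>x y. (x, y) \<in> R \<longrightarrow> (src \<Gamma> x, src \<Gamma> y) \<in> R) \<and>
     (\<forall>x y. (x, y) \<in> R \<longrightarrow> (rev \<Gamma> x, rev \<Gamma> y) \<in> R)"

definition cofinite_graph :: "'a graph \<Rightarrow> ('a \<times> 'a) set set \<Rightarrow> bool" where
  "cofinite_graph \<Gamma> \<U> \<longleftrightarrow> is_graph \<Gamma> \<and> cofinite_uniformity (carr \<Gamma>) (compatible_equiv \<Gamma>) \<U>"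

text \<open>Path connectedness of the quotient graph X/R: any two vertex classes are joined by
  a finite string of edge classes [e_1] ... [e_n] with [t e_i] = [s e_(i+1)].\<close>
definition quot_walk :: "'a graph \<Rightarrow> ('a \<times> 'a) set \<Rightarrow> 'a \<Rightarrow> 'a \<Rightarrow> 'a list \<Rightarrow> bool" where
  "quot_walk \<Gamma> R v w es \<longleftrightarrow>
     set es \<subseteq> edges \<Gamma> \<and>
     (if es = [] then (v, w) \<in> R
      else (v, src \<Gamma> (hd es)) \<in> R \<and> (tgt \<Gamma> (last es), w) \<in> R \<and>
           (\<forall>i. Suc i < length es \<longrightarrow> (tgt \<Gamma> (es ! i), src \<Gamma> (es ! Suc i)) \<in> R))"

definition quotient_path_connected :: "'a graph \<Rightarrow> ('a \<times> 'a) set \<Rightarrow> bool" where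
  "quotient_path_connected \<Gamma> R \<longleftrightarrow>
     (\<forall>v\<in>verts \<Gamma>. \<forall>w\<in>verts \<Gamma>. \<exists>es. quot_walk \<Gamma> R v w es)"

definition cofinitely_connected :: "'a graph \<Rightarrow> ('a \<times> 'a) set set \<Rightarrow> bool" where
  "cofinitely_connected \<Gamma> \<U> \<longleftrightarrow>
     (\<forall>R\<in>\<U>. compatible_equiv \<Gamma> R \<and> finite (carr \<Gamma> // R) \<longrightarrow> quotient_path_connected \<Gamma> R)"

definition cayley_graph ::
  "('g, 'b) monoid_scheme \<Rightarrow> 'x graph \<Rightarrow> ('x \<Rightarrow> 'g) \<Rightarrow> ('g \<times> 'x) graph" where
  "cayley_graph G X \<alpha> =
     \<lparr> carr = carrier G \<times> carr X,
       verts = carrier G \<times> verts X,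
       src = (\<lambda>(g, x). (g, src X x)),
       rev = (\<lambda>(g, x). (g \<otimes>\<^bsub>G\<^esub> \<alpha> x, rev X x)) \<rparr>"

definition prod_rel :: "('g \<times> 'g) set \<Rightarrow> ('x \<times> 'x) set \<Rightarrow> (('g \<times> 'x) \<times> ('g \<times> 'x)) set" where
  "prod_rel R S = {((g, x), (h, y)). (g, h) \<in> R \<and> (x, y) \<in> S}"

definition product_uniformity ::
  "'g set \<Rightarrow> 'x set \<Rightarrow> ('g \<times> 'g) set set \<Rightarrow> ('x \<times> 'x) set set
     \<Rightarrow> (('g \<times> 'x) \<times> ('g \<times> 'x)) set set" where
  "product_uniformity A B \<U> \<V> =
     {W. W \<subseteq> (A \<times> B) \<times> (A \<times> B) \<and> (\<exists>R\<in>\<U>. \<exists>S\<in>\<V>. prod_rel R S \<subseteq> W)}"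

end

theory Submission
  imports Defs
begin

lemma quot_walk_Nil: "quot_walk \<Gamma> R v w [] \<longleftrightarrow> (v, w) \<in> R"
  by (simp add: quot_walk_def)

lemma quot_walk_Cons:
  "quot_walk \<Gamma> R v w (e # es) \<longleftrightarrow>
     e \<in> edges \<Gamma> \<and> (v, src \<Gamma> e) \<in> R \<and> quot_walk \<Gamma> R (tgt \<Gamma> e) w es"
proof (cases es)
  case Nil then show ?thesis by (auto simp: quot_walk_def)
next
  case (Cons a as)
  have ne: "e # es \<noteq> []" "es \<noteq> []" using Cons by auto
  show ?thesis
  proof
    assume H: "quot_walk \<Gamma> R v w (e # es)"
    have A: "\<forall>i. Suc i < length (e # es) \<longrightarrow> (tgt \<Gamma> ((e # es) ! i), src \<Gamma> ((e # es) ! Suc i)) \<in> R"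
      using H ne(1) unfolding quot_walk_def by (simp only: if_False) blast
    have "\<forall>i. Suc i < length es \<longrightarrow> (tgt \<Gamma> (es ! i), src \<Gamma> (es ! Suc i)) \<in> R"
    proof (intro allI impI)
      fix i assume "Suc i < length es"
      then have "Suc (Suc i) < length (e # es)" by simp
      then have "(tgt \<Gamma> ((e # es) ! Suc i), src \<Gamma> ((e # es) ! Suc (Suc i))) \<in> R" using A by blast
      then show "(tgt \<Gamma> (es ! i), src \<Gamma> (es ! Suc i)) \<in> R" by simp
    qed
    moreover have "(tgt \<Gamma> e, src \<Gamma> (hd es)) \<in> R"
    proof -
      have "Suc 0 < length (e # es)" using Cons by simp
      then have "(tgt \<Gamma> ((e # es) ! 0), src \<Gamma> ((e # es) ! Suc 0)) \<in> R" using A by blast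
      then show ?thesis using Cons by simp
    qed
    ultimately show "e \<in> edges \<Gamma> \<and> (v, src \<Gamma> e) \<in> R \<and> quot_walk \<Gamma> R (tgt \<Gamma> e) w es"
      using H Cons unfolding quot_walk_def by auto
  next
    assume H: "e \<in> edges \<Gamma> \<and> (v, src \<Gamma> e) \<in> R \<and> quot_walk \<Gamma> R (tgt \<Gamma> e) w es"
    have "\<forall>i. Suc i < length (e # es) \<longrightarrow> (tgt \<Gamma> ((e#es) ! i), src \<Gamma> ((e#es) ! Suc i)) \<in> R"
    proof (intro allI impI)
      fix i assume i: "Suc i < length (e # es)"
      show "(tgt \<Gamma> ((e#es) ! i), src \<Gamma> ((e#es) ! Suc i)) \<in> R"
      proof (cases i)
        case 0 then show ?thesis using H Cons unfolding quot_walk_def by auto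
      next
        case (Suc j) then show ?thesis using H Cons i unfolding quot_walk_def by auto
      qed
    qed
    then show "quot_walk \<Gamma> R v w (e # es)" using H Cons unfolding quot_walk_def by auto
  qed
qed

lemma quot_walk_invariant:
  assumes "quot_walk \<Gamma> R v w es" "Q v"
    and "\<And>a b. (a, b) \<in> R \<Longrightarrow> Q a \<Longrightarrow> Q b"
    and "\<And>e. e \<in> edges \<Gamma> \<Longrightarrow> Q (src \<Gamma> e) \<Longrightarrow> Q (tgt \<Gamma> e)"
  shows "Q w"
  using assms(1,2)
proof (induction es arbitrary: v)
  case Nil then show ?case using assms(3) by (simp add: quot_walk_Nil)
next
  case (Cons e es)
  then show ?case using assms(3,4) by (metis quot_walk_Cons)
qed

fun wprod :: "('g, 'b) monoid_scheme \<Rightarrow> ('x \<Rightarrow> 'g) \<Rightarrow> 'x list \<Rightarrow> 'g" where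
  "wprod G \<alpha> [] = \<one>\<^bsub>G\<^esub>"
| "wprod G \<alpha> (e # es) = \<alpha> e \<otimes>\<^bsub>G\<^esub> wprod G \<alpha> es"

fun cwalk :: "('g, 'b) monoid_scheme \<Rightarrow> ('x \<Rightarrow> 'g) \<Rightarrow> 'g \<Rightarrow> 'x list \<Rightarrow> ('g \<times> 'x) list" where
  "cwalk G \<alpha> g [] = []"
| "cwalk G \<alpha> g (e # es) = (g, e) # cwalk G \<alpha> (g \<otimes>\<^bsub>G\<^esub> \<alpha> e) es"

lemma wprod_carrier:
  assumes "group G" "\<alpha> \<in> carr X \<rightarrow> carrier G" "set es \<subseteq> carr X"
  shows "wprod G \<alpha> es \<in> carrier G"
  using assms(3) by (induction es) (use assms(1,2) group.is_monoid in \<open>auto intro: monoid.m_closed\<close>)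

lemma wprod_append:
  assumes "group G" "\<alpha> \<in> carr X \<rightarrow> carrier G" "set es \<subseteq> carr X" "set fs \<subseteq> carr X"
  shows "wprod G \<alpha> (es @ fs) = wprod G \<alpha> es \<otimes>\<^bsub>G\<^esub> wprod G \<alpha> fs"
  using assms(3)
proof (induction es)
  case Nil then show ?case using wprod_carrier[OF assms(1,2,4)] assms(1) by (simp add: group.is_monoid monoid.l_one)
next
  case (Cons e es)
  have a: "\<alpha> e \<in> carrier G" using Cons.prems assms(2) by auto
  have b: "wprod G \<alpha> es \<in> carrier G" using Cons.prems wprod_carrier[OF assms(1,2)] by auto
  have c: "wprod G \<alpha> fs \<in> carrier G" using wprod_carrier[OF assms(1,2,4)] .
  show ?case using Cons a b c monoid.m_assoc[OF group.is_monoid[OF assms(1)]] by auto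
qed

lemma generate_wprod:
  assumes "group G" "\<alpha> \<in> carr X \<rightarrow> carrier G" "verts X = {star}" "verts X \<subseteq> carr X"
    "\<alpha> star = \<one>\<^bsub>G\<^esub>" "\<forall>e\<in>edges X. \<alpha> (rev X e) = inv\<^bsub>G\<^esub> (\<alpha> e)"
    "\<forall>x\<in>carr X. rev X x \<in> carr X \<and> rev X (rev X x) = x" "rev X star = star"
    and w: "w \<in> generate G (\<alpha> ` carr X)"
  shows "\<exists>es. set es \<subseteq> edges X \<and> w = wprod G \<alpha> es"
  using w
proof (induction rule: generate.induct)
  case one
  then show ?case by (intro exI[of _ "[]"]) simp
next
  case (incl h)
  then obtain x where x: "x \<in> carr X" "h = \<alpha> x" by auto
  show ?case
  proof (cases "x = star")
    case True then show ?thesis using x assms(5) by (intro exI[of _ "[]"]) simp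
  next
    case False
    then have "x \<in> edges X" using x assms(3) by (auto simp: edges_def)
    moreover have "\<alpha> x \<in> carrier G" using x assms(2) by auto
    ultimately show ?thesis using x assms(1) by (intro exI[of _ "[x]"]) (simp add: group.is_monoid monoid.r_one)
  qed
next
  case (inv h)
  then obtain x where x: "x \<in> carr X" "h = \<alpha> x" by auto
  show ?case
  proof (cases "x = star")
    case True then show ?thesis using x assms(5) assms(1) by (intro exI[of _ "[]"]) (simp add: monoid.inv_one group.is_monoid)
  next
    case False
    then have e: "x \<in> edges X" using x assms(3) by (auto simp: edges_def)
    have r: "rev X x \<in> carr X" using x assms(7) by auto
    have "rev X x \<noteq> star"
    proof
      assume "rev X x = star"
      then have "rev X (rev X x) = star" using assms(8) by simp
      then show False using assms(7) x False by simp
    qed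
    then have "rev X x \<in> edges X" using r assms(3) by (auto simp: edges_def)
    moreover have "\<alpha> (rev X x) \<in> carrier G" using r assms(2) by auto
    ultimately show ?thesis using x e assms(1,6) by (intro exI[of _ "[rev X x]"]) (simp add: group.is_monoid monoid.r_one)
  qed
next
  case (eng h1 h2)
  then obtain es fs where "set es \<subseteq> edges X" "h1 = wprod G \<alpha> es" "set fs \<subseteq> edges X" "h2 = wprod G \<alpha> fs"
    by blast
  moreover have "edges X \<subseteq> carr X" by (auto simp: edges_def)
  ultimately show ?case using wprod_append[OF assms(1,2)] by (intro exI[of _ "es @ fs"]) auto
qed


lemma equiv_prod_rel:
  assumes "equiv A R" "equiv B S"
  shows "equiv (A \<times> B) (prod_rel R S)"
proof (rule equivI)
  from assms(1) obtain r1: "R \<subseteq> A \<times> A" "refl_on A R" "sym R" "trans R" by (rule equivE)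
  from assms(2) obtain s1: "S \<subseteq> B \<times> B" "refl_on B S" "sym S" "trans S" by (rule equivE)
  show "prod_rel R S \<subseteq> (A \<times> B) \<times> A \<times> B" using r1 s1 by (auto simp: prod_rel_def)
  show "refl_on (A \<times> B) (prod_rel R S)" using r1 s1 by (auto simp: prod_rel_def refl_on_def)
  show "sym (prod_rel R S)" using r1(3) s1(3) unfolding prod_rel_def by (auto intro!: symI dest: symD)
  show "trans (prod_rel R S)" using r1(4) s1(4) unfolding prod_rel_def by (auto intro!: transI dest: transD)
qed

lemma finite_quot_prod_rel:
  assumes "finite (A // R)" "finite (B // S)"
  shows "finite ((A \<times> B) // prod_rel R S)"
proof -
  have "(A \<times> B) // prod_rel R S \<subseteq> (\<lambda>(P, Q). P \<times> Q) ` (A // R \<times> B // S)"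
  proof
    fix Z assume "Z \<in> (A \<times> B) // prod_rel R S"
    then obtain a b where ab: "a \<in> A" "b \<in> B" "Z = prod_rel R S `` {(a, b)}"
      by (auto elim!: quotientE)
    have "Z = R `` {a} \<times> S `` {b}" using ab(3) by (auto simp: prod_rel_def)
    then show "Z \<in> (\<lambda>(P, Q). P \<times> Q) ` (A // R \<times> B // S)"
      using ab by (auto intro!: image_eqI[where x="(R `` {a}, S `` {b})"] quotientI)
  qed
  then show ?thesis by (rule finite_subset) (use assms in auto)
qed

theorem mainTheorem8:
  fixes G :: "('g, 'b) monoid_scheme" and \<U>G :: "('g \<times> 'g) set set"
    and X :: "'x graph" and \<U>X :: "('x \<times> 'x) set set"
    and star :: 'x and \<alpha> :: "'x \<Rightarrow> 'g"
  assumes "cofinite_group G \<U>G"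
    and "cofinite_graph X \<U>X"
    and "verts X = {star}"
    and "\<alpha> \<in> carr X \<rightarrow> carrier G"
    and "unif_continuous (carr X) \<U>X \<U>G \<alpha>"
    and "\<alpha> star = \<one>\<^bsub>G\<^esub>"
    and "\<forall>e\<in>edges X. \<alpha> (rev X e) = inv\<^bsub>G\<^esub> (\<alpha> e)"
  shows "uniform_closure (carrier G) \<U>G (generate G (\<alpha> ` carr X)) = carrier G
     \<longleftrightarrow> cofinitely_connected (cayley_graph G X \<alpha>)
           (product_uniformity (carrier G) (carr X) \<U>G \<U>X)"
proof -
  have grp: "group G" and UG: "cofinite_uniformity (carrier G) (congruence_rel G) \<U>G"
    using assms(1) by (auto simp: cofinite_group_def)
  interpret group G by (rule grp)
  have fundG: "\<forall>U\<in>\<U>G. \<exists>R\<in>\<U>G. R \<subseteq> U \<and> cofinite_equiv (carrier G) R \<and> congruence_rel G R"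
    using UG unfolding cofinite_uniformity_def by (elim conjE) assumption
  have isg: "is_graph X" and UXu: "cofinite_uniformity (carr X) (compatible_equiv X) \<U>X"
    using assms(2) by (auto simp: cofinite_graph_def)
  have fundX: "\<forall>U\<in>\<U>X. \<exists>R\<in>\<U>X. R \<subseteq> U \<and> cofinite_equiv (carr X) R \<and> compatible_equiv X R"
    using UXu unfolding cofinite_uniformity_def by (elim conjE) assumption
  have IdX: "\<forall>U\<in>\<U>X. Id_on (carr X) \<subseteq> U \<and> U \<subseteq> carr X \<times> carr X"
    using UXu unfolding cofinite_uniformity_def by (elim conjE) assumption
  have vsub: "verts X \<subseteq> carr X" using isg by (auto simp: is_graph_def)
  have starX: "star \<in> carr X" using vsub assms(3) by auto
  have srcX: "\<And>x. x \<in> carr X \<Longrightarrow> src X x = star" using isg assms(3) by (auto simp: is_graph_def)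
  have revX: "\<forall>x\<in>carr X. rev X x \<in> carr X \<and> rev X (rev X x) = x" using isg by (auto simp: is_graph_def)
  have revstar: "rev X star = star" using isg assms(3) by (auto simp: is_graph_def)
  have edgesX: "edges X \<subseteq> carr X" by (auto simp: edges_def)
  have alphaC: "\<And>x. x \<in> carr X \<Longrightarrow> \<alpha> x \<in> carrier G" using assms(4) by auto
  define \<Gamma> where "\<Gamma> = cayley_graph G X \<alpha>"
  define H where "H = generate G (\<alpha> ` carr X)"
  have carr\<Gamma>: "carr \<Gamma> = carrier G \<times> carr X" and verts\<Gamma>: "verts \<Gamma> = carrier G \<times> {star}"
    and src\<Gamma>: "src \<Gamma> = (\<lambda>(g, x). (g, src X x))"
    and rev\<Gamma>: "rev \<Gamma> = (\<lambda>(g, x). (g \<otimes>\<^bsub>G\<^esub> \<alpha> x, rev X x))"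
    by (simp_all add: \<Gamma>_def cayley_graph_def assms(3))
  have edges\<Gamma>: "edges \<Gamma> = carrier G \<times> edges X"
    using carr\<Gamma> verts\<Gamma> assms(3) by (auto simp: edges_def)
  have tgt\<Gamma>: "\<And>g x. x \<in> carr X \<Longrightarrow> tgt \<Gamma> (g, x) = (g \<otimes>\<^bsub>G\<^esub> \<alpha> x, star)"
    using src\<Gamma> rev\<Gamma> revX srcX by (auto simp: tgt_def)
  have src\<Gamma>': "\<And>g x. x \<in> carr X \<Longrightarrow> src \<Gamma> (g, x) = (g, star)"
    using src\<Gamma> srcX by auto
  show ?thesis unfolding \<Gamma>_def[symmetric] H_def[symmetric]
  proof
    assume cl: "uniform_closure (carrier G) \<U>G H = carrier G"
    show "cofinitely_connected \<Gamma> (product_uniformity (carrier G) (carr X) \<U>G \<U>X)"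
      unfolding cofinitely_connected_def quotient_path_connected_def
    proof (intro ballI impI)
      fix W v w
      assume W: "W \<in> product_uniformity (carrier G) (carr X) \<U>G \<U>X"
        and Wc: "compatible_equiv \<Gamma> W \<and> finite (carr \<Gamma> // W)"
        and v: "v \<in> verts \<Gamma>" and w: "w \<in> verts \<Gamma>"
      from W obtain R S where R: "R \<in> \<U>G" and S: "S \<in> \<U>X" and RS: "prod_rel R S \<subseteq> W"
        unfolding product_uniformity_def by blast
      obtain R0 where R0: "R0 \<in> \<U>G" "R0 \<subseteq> R" "cofinite_equiv (carrier G) R0" "congruence_rel G R0"
        using fundG R by blast
      have eqW: "equiv (carr \<Gamma>) W" using Wc by (simp add: compatible_equiv_def)
      have eqR0: "equiv (carrier G) R0" using R0 by (simp add: cofinite_equiv_def)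
      have Sstar: "(star, star) \<in> S" using IdX S starX by blast
      obtain g where g: "g \<in> carrier G" "v = (g, star)" using v verts\<Gamma> by auto
      obtain h where h: "h \<in> carrier G" "w = (h, star)" using w verts\<Gamma> by auto
      have "inv\<^bsub>G\<^esub> g \<otimes>\<^bsub>G\<^esub> h \<in> uniform_closure (carrier G) \<U>G H" using cl g h by auto
      then obtain u where u: "u \<in> H" "(inv\<^bsub>G\<^esub> g \<otimes>\<^bsub>G\<^esub> h, u) \<in> R0"
        using R0(1) unfolding uniform_closure_def by blast
      have R0refl: "\<And>a. a \<in> carrier G \<Longrightarrow> (a, a) \<in> R0" using eqR0 unfolding equiv_def by (blast dest: refl_onD)
      have R0sym: "\<And>a b. (a, b) \<in> R0 \<Longrightarrow> (b, a) \<in> R0" using eqR0 unfolding equiv_def by (blast dest: symD)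
      have gg: "(g, g) \<in> R0" using R0refl g(1) by blast
      have cong: "\<And>a b c d. (a, b) \<in> R0 \<Longrightarrow> (c, d) \<in> R0 \<Longrightarrow> (a \<otimes>\<^bsub>G\<^esub> c, b \<otimes>\<^bsub>G\<^esub> d) \<in> R0"
        using R0(4) unfolding congruence_rel_def by blast
      have "(g \<otimes>\<^bsub>G\<^esub> (inv\<^bsub>G\<^esub> g \<otimes>\<^bsub>G\<^esub> h), g \<otimes>\<^bsub>G\<^esub> u) \<in> R0"
        by (rule cong[OF gg u(2)])
      then have "(h, g \<otimes>\<^bsub>G\<^esub> u) \<in> R0" using g h by (simp add: m_assoc[symmetric])
      then have "(g \<otimes>\<^bsub>G\<^esub> u, h) \<in> R0" by (rule R0sym)
      then have "((g \<otimes>\<^bsub>G\<^esub> u, star), (h, star)) \<in> prod_rel R S" using R0(2) Sstar unfolding prod_rel_def by blast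
      then have fin: "((g \<otimes>\<^bsub>G\<^esub> u, star), w) \<in> W" using RS h(2) by blast
      obtain es where es: "set es \<subseteq> edges X" "u = wprod G \<alpha> es"
        using generate_wprod[OF grp assms(4) assms(3) vsub assms(6) assms(7) revX revstar] u(1)
        unfolding H_def by blast
      have walk: "\<And>k. k \<in> carrier G \<Longrightarrow> ((k \<otimes>\<^bsub>G\<^esub> wprod G \<alpha> es, star), w) \<in> W
          \<Longrightarrow> quot_walk \<Gamma> W (k, star) w (cwalk G \<alpha> k es)"
        using es(1)
      proof (induction es)
        case Nil then show ?case by (simp add: quot_walk_Nil)
      next
        case (Cons e es)
        have e: "e \<in> carr X" "e \<in> edges X" using Cons.prems(3) edgesX by auto
        have ae: "\<alpha> e \<in> carrier G" using alphaC e by auto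
        have wc: "wprod G \<alpha> es \<in> carrier G"
          using wprod_carrier[OF grp assms(4)] Cons.prems(3) edgesX by auto
        have "(k, star) \<in> carr \<Gamma>" using Cons.prems(1) starX carr\<Gamma> by blast
        then have refl: "((k, star), (k, star)) \<in> W" using eqW unfolding equiv_def by (blast dest: refl_onD)
        have kae: "k \<otimes>\<^bsub>G\<^esub> \<alpha> e \<in> carrier G" using Cons.prems(1) ae by (rule m_closed)
        have "k \<otimes>\<^bsub>G\<^esub> \<alpha> e \<otimes>\<^bsub>G\<^esub> wprod G \<alpha> es = k \<otimes>\<^bsub>G\<^esub> wprod G \<alpha> (e # es)"
          using Cons.prems(1) ae wc by (simp add: m_assoc)
        then have "((k \<otimes>\<^bsub>G\<^esub> \<alpha> e \<otimes>\<^bsub>G\<^esub> wprod G \<alpha> es, star), w) \<in> W" using Cons.prems(2) by simp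
        moreover have "set es \<subseteq> edges X" using Cons.prems(3) by simp
        ultimately have "quot_walk \<Gamma> W (k \<otimes>\<^bsub>G\<^esub> \<alpha> e, star) w (cwalk G \<alpha> (k \<otimes>\<^bsub>G\<^esub> \<alpha> e) es)"
          using Cons.IH kae by blast
        moreover have "(k, e) \<in> edges \<Gamma>" using e(2) Cons.prems(1) edges\<Gamma> by blast
        ultimately show ?case using refl src\<Gamma>'[OF e(1)] tgt\<Gamma>[OF e(1)]
          by (simp add: quot_walk_Cons)
      qed
      have "quot_walk \<Gamma> W (g, star) w (cwalk G \<alpha> g es)" using walk[OF g(1)] fin es(2) by blast
      then show "\<exists>es. quot_walk \<Gamma> W v w es" using g(2) by blast
    qed
  next
    assume cc: "cofinitely_connected \<Gamma> (product_uniformity (carrier G) (carr X) \<U>G \<U>X)"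
    show "uniform_closure (carrier G) \<U>G H = carrier G"
    proof
      show "uniform_closure (carrier G) \<U>G H \<subseteq> carrier G" by (auto simp: uniform_closure_def)
      show "carrier G \<subseteq> uniform_closure (carrier G) \<U>G H"
      proof
        fix x assume x: "x \<in> carrier G"
        have "\<forall>U\<in>\<U>G. U `` {x} \<inter> H \<noteq> {}"
        proof
          fix U assume U: "U \<in> \<U>G"
          obtain R0 where R0: "R0 \<in> \<U>G" "R0 \<subseteq> U" "cofinite_equiv (carrier G) R0" "congruence_rel G R0"
            using fundG U by blast
          obtain U' where U': "U' \<in> \<U>X" "map_prod \<alpha> \<alpha> ` U' \<subseteq> R0"
            using assms(5) R0(1) by (auto simp: unif_continuous_def)
          obtain S where S: "S \<in> \<U>X" "S \<subseteq> U'" "cofinite_equiv (carr X) S" "compatible_equiv X S"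
            using fundX U'(1) by blast
          have eqR0: "equiv (carrier G) R0" and finR0: "finite (carrier G // R0)"
            using R0 by (auto simp: cofinite_equiv_def)
          have eqS: "equiv (carr X) S" and finS: "finite (carr X // S)"
            using S by (auto simp: cofinite_equiv_def)
          have R0refl: "\<And>a. a \<in> carrier G \<Longrightarrow> (a, a) \<in> R0" using eqR0 unfolding equiv_def by (blast dest: refl_onD)
          have cong: "\<And>a b c d. (a, b) \<in> R0 \<Longrightarrow> (c, d) \<in> R0 \<Longrightarrow> (a \<otimes>\<^bsub>G\<^esub> c, b \<otimes>\<^bsub>G\<^esub> d) \<in> R0"
            using R0(4) unfolding congruence_rel_def by blast
          have R0sym: "\<And>a b. (a, b) \<in> R0 \<Longrightarrow> (b, a) \<in> R0" using eqR0 unfolding equiv_def by (blast dest: symD)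
          have R0trans: "\<And>a b c. (a, b) \<in> R0 \<Longrightarrow> (b, c) \<in> R0 \<Longrightarrow> (a, c) \<in> R0" using eqR0 unfolding equiv_def by (blast dest: transD)
          define W where "W = prod_rel R0 S"
          have eqW: "equiv (carr \<Gamma>) W" unfolding W_def carr\<Gamma> by (rule equiv_prod_rel[OF eqR0 eqS])
          have Wsub: "W \<subseteq> (carrier G \<times> carr X) \<times> (carrier G \<times> carr X)" using eqW carr\<Gamma> unfolding equiv_def by simp
          have WU: "W \<in> product_uniformity (carrier G) (carr X) \<U>G \<U>X"
            using Wsub R0(1) S(1) unfolding product_uniformity_def W_def by blast
          have Sc: "\<And>a b. (a, b) \<in> S \<Longrightarrow> (a \<in> verts X \<longleftrightarrow> b \<in> verts X) \<and> (src X a, src X b) \<in> S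
              \<and> (rev X a, rev X b) \<in> S"
            using S(4) by (auto simp: compatible_equiv_def)
          have R0sub: "R0 \<subseteq> carrier G \<times> carrier G" using eqR0 unfolding equiv_def by simp
          have aR: "\<And>a b. (a, b) \<in> S \<Longrightarrow> (\<alpha> a, \<alpha> b) \<in> R0" using S(2) U'(2) by auto
          have Wc: "compatible_equiv \<Gamma> W"
            unfolding compatible_equiv_def
          proof (intro conjI allI impI eqW)
            fix p q assume pq: "(p, q) \<in> W"
            then obtain g a h b where pq': "p = (g, a)" "q = (h, b)" "(g, h) \<in> R0" "(a, b) \<in> S"
              unfolding W_def prod_rel_def by auto
            show "(p \<in> verts \<Gamma>) = (q \<in> verts \<Gamma>)" using pq' Sc[OF pq'(4)] R0sub verts\<Gamma> assms(3) by auto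
            show "(src \<Gamma> p, src \<Gamma> q) \<in> W" using pq' Sc[OF pq'(4)] src\<Gamma> by (simp add: W_def prod_rel_def)
            have "(g \<otimes>\<^bsub>G\<^esub> \<alpha> a, h \<otimes>\<^bsub>G\<^esub> \<alpha> b) \<in> R0" using cong pq'(3) aR[OF pq'(4)] by blast
            then show "(rev \<Gamma> p, rev \<Gamma> q) \<in> W" using pq' Sc[OF pq'(4)] rev\<Gamma> by (simp add: W_def prod_rel_def)
          qed
          have Wf: "finite (carr \<Gamma> // W)" unfolding W_def carr\<Gamma>
            by (rule finite_quot_prod_rel[OF finR0 finS])
          have qpc: "quotient_path_connected \<Gamma> W" using cc WU Wc Wf unfolding cofinitely_connected_def by blast
          then obtain es where es: "quot_walk \<Gamma> W (\<one>\<^bsub>G\<^esub>, star) (x, star) es"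
            using verts\<Gamma> x one_closed unfolding quotient_path_connected_def by blast
          have "\<exists>h\<in>H. (fst (x, star), h) \<in> R0"
          proof (rule quot_walk_invariant[OF es, where Q="\<lambda>p. \<exists>h\<in>H. (fst p, h) \<in> R0"])
            show "\<exists>h\<in>H. (fst (\<one>\<^bsub>G\<^esub>, star), h) \<in> R0" using R0refl[OF one_closed] generate.one[of G] unfolding H_def
              by auto
          next
            fix a b assume ab: "(a, b) \<in> W" and "\<exists>h\<in>H. (fst a, h) \<in> R0"
            then obtain h where h: "h \<in> H" "(fst a, h) \<in> R0" by blast
            obtain a1 a2 b1 b2 where "a = (a1, a2)" "b = (b1, b2)" by (cases a, cases b) blast
            then have "(fst a, fst b) \<in> R0" using ab unfolding W_def prod_rel_def by simp
            then have "(fst b, h) \<in> R0" using R0sym R0trans h(2) by blast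
            then show "\<exists>h\<in>H. (fst b, h) \<in> R0" using h(1) by blast
          next
            fix e assume e: "e \<in> edges \<Gamma>" "\<exists>h\<in>H. (fst (src \<Gamma> e), h) \<in> R0"
            then obtain k y where ky: "e = (k, y)" "k \<in> carrier G" "y \<in> edges X" using edges\<Gamma> by auto
            then have y: "y \<in> carr X" using edgesX by auto
            from e(2) obtain h where h: "h \<in> H" "(k, h) \<in> R0" using ky src\<Gamma>' y by auto
            have "(\<alpha> y, \<alpha> y) \<in> R0" using R0refl alphaC y by blast
            then have "(k \<otimes>\<^bsub>G\<^esub> \<alpha> y, h \<otimes>\<^bsub>G\<^esub> \<alpha> y) \<in> R0" using cong h(2) by blast
            moreover have "h \<otimes>\<^bsub>G\<^esub> \<alpha> y \<in> H" using h(1) y unfolding H_def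
              by (auto intro: generate.eng generate.incl)
            ultimately show "\<exists>h\<in>H. (fst (tgt \<Gamma> e), h) \<in> R0" using ky tgt\<Gamma> y by auto
          qed
          then obtain h where "h \<in> H" "(x, h) \<in> R0" by auto
          then show "U `` {x} \<inter> H \<noteq> {}" using R0(2) by blast
        qed
        then show "x \<in> uniform_closure (carrier G) \<U>G H" using x by (simp add: uniform_closure_def)
      qed
    qed
  qed
qed

end
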